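(* Assume the standing hypotheses (H). If $A\subseteq V(G)$ is a stable set such that $\bigcap_{v\in A}L(v)\neq\varnothing$, then \[\left\lceil\frac{|V(G-A)|+\chi(G-A)-1}{3}\right\rceil=\left\lceil\frac{n+k-1}{3}\right\rceil.\]
   Context: A list assignment $L$ assigns to each vertex $v$ a set $L(v)$ of colors; an $L$-coloring is a proper coloring $f$ with $f(v)\in L(v)$ for all $v$; $\mathrm{ch}$ denotes choice number and $\chi$ chromatic number. A part of a complete multipartite graph is one of its maximal stable sets. Standing hypotheses (H): $k\ge1$ and $n\ge 2k+2$ are integers; $G$ is a complete $k$-partite graph (exactly $k$ nonempty parts) on $n$ vertices; $L$ is a list assignment for $G$ with $|L(v)|\ge\lceil (n+k-1)/3\rceil$ for every vertex $v$; $G$ has no $L$-coloring; $\left|\bigcup_{v\in V(G)}L(v)\right|\le n-1$; and every graph $H$ with fewer than $n$ vertices satisfies $\mathrm{ch}(H)\le\max\{\chi(H),\lceil(|V(H)|+\chi(H)-1)/3\rceil\}$. *)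

theory Defs
  imports Complex_Main
begin

definition graph :: "'a set \<Rightarrow> ('a \<Rightarrow> 'a \<Rightarrow> bool) \<Rightarrow> bool" where
  "graph V E \<longleftrightarrow> finite V \<and>
     (\<forall>u v. E u v \<longrightarrow> u \<in> V \<and> v \<in> V \<and> u \<noteq> v \<and> E v u)"

definition proper_coloring :: "'a set \<Rightarrow> ('a \<Rightarrow> 'a \<Rightarrow> bool) \<Rightarrow> ('a \<Rightarrow> 'c) \<Rightarrow> bool" where
  "proper_coloring V E f \<longleftrightarrow> (\<forall>u\<in>V. \<forall>v\<in>V. E u v \<longrightarrow> f u \<noteq> f v)"

definition L_colorable :: "'a set \<Rightarrow> ('a \<Rightarrow> 'a \<Rightarrow> bool) \<Rightarrow> ('a \<Rightarrow> 'c set) \<Rightarrow> bool" where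
  "L_colorable V E L \<longleftrightarrow> (\<exists>f. proper_coloring V E f \<and> (\<forall>v\<in>V. f v \<in> L v))"

definition chromatic_number :: "'a set \<Rightarrow> ('a \<Rightarrow> 'a \<Rightarrow> bool) \<Rightarrow> nat" where
  "chromatic_number V E =
     (LEAST k. \<exists>f :: 'a \<Rightarrow> nat. proper_coloring V E f \<and> f ` V \<subseteq> {..<k})"

text \<open>Choice number: least k such that every assignment of lists of size at least k
  admits an L-coloring (colours taken from nat, w.l.o.g.).\<close>
definition choice_number :: "'a set \<Rightarrow> ('a \<Rightarrow> 'a \<Rightarrow> bool) \<Rightarrow> nat" where
  "choice_number V E =
     (LEAST k. \<forall>L :: 'a \<Rightarrow> nat set.
        (\<forall>v\<in>V. finite (L v) \<and> k \<le> card (L v)) \<longrightarrow> L_colorable V E L)"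

definition induced_edges :: "('a \<Rightarrow> 'a \<Rightarrow> bool) \<Rightarrow> 'a set \<Rightarrow> 'a \<Rightarrow> 'a \<Rightarrow> bool" where
  "induced_edges E W = (\<lambda>u v. E u v \<and> u \<in> W \<and> v \<in> W)"

definition stable_set :: "'a set \<Rightarrow> ('a \<Rightarrow> 'a \<Rightarrow> bool) \<Rightarrow> 'a set \<Rightarrow> bool" where
  "stable_set V E A \<longleftrightarrow> A \<subseteq> V \<and> (\<forall>u\<in>A. \<forall>v\<in>A. \<not> E u v)"

definition complete_multipartite :: "nat \<Rightarrow> 'a set \<Rightarrow> ('a \<Rightarrow> 'a \<Rightarrow> bool) \<Rightarrow> bool" where
  "complete_multipartite k V E \<longleftrightarrow>
     (\<exists>P. card P = k \<and> finite P \<and> {} \<notin> P \<and> \<Union>P = V \<and>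
        (\<forall>X\<in>P. \<forall>Y\<in>P. X \<noteq> Y \<longrightarrow> X \<inter> Y = {}) \<and>
        (\<forall>u v. E u v \<longleftrightarrow> u \<in> V \<and> v \<in> V \<and> \<not> (\<exists>X\<in>P. u \<in> X \<and> v \<in> X)))"

end

theory Submission imports Defs begin

lemma inj_list_choice:
  assumes "finite S" "\<forall>v\<in>S. finite (L v) \<and> card S \<le> card (L v)"
  shows "\<exists>f. inj_on f S \<and> (\<forall>v\<in>S. f v \<in> L v)"
proof -
  have "\<And>S'. finite S' \<Longrightarrow> S' \<subseteq> S \<Longrightarrow> \<exists>f. inj_on f S' \<and> (\<forall>v\<in>S'. f v \<in> L v)"
  proof -
    fix S' :: "'a set" assume "finite S'" "S' \<subseteq> S"
    then show "\<exists>f. inj_on f S' \<and> (\<forall>v\<in>S'. f v \<in> L v)"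
    proof (induction S' rule: finite_induct)
      case empty then show ?case by simp
    next
      case (insert x F)
      have FS: "F \<subseteq> S" using insert.prems by simp
      have xS: "x \<in> S" using insert.prems by simp
      obtain f where f: "inj_on f F" "\<forall>v\<in>F. f v \<in> L v" using insert.IH[OF FS] by blast
      have "F \<subset> S" using FS xS insert.hyps(2) by blast
      hence "card F < card S" using assms(1) psubset_card_mono by blast
      also have "\<dots> \<le> card (L x)" using assms(2) xS by blast
      finally have lt: "card (f ` F) < card (L x)" using card_image_le[OF insert.hyps(1), of f] by linarith
      have "\<not> L x \<subseteq> f ` F"
      proof
        assume "L x \<subseteq> f ` F"
        hence "card (L x) \<le> card (f ` F)" using card_mono finite_imageI[OF insert.hyps(1)] by blast
        thus False using lt by linarith
      qed
      then obtain c where c: "c \<in> L x" "c \<notin> f ` F" by blast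
      have i1: "inj_on (f(x:=c)) F" using f(1) insert.hyps(2) by (simp add: inj_on_def)
      have "(f(x:=c)) ` F = f ` F" using insert.hyps(2) by (intro image_cong) auto
      hence "(f(x:=c)) x \<notin> (f(x:=c)) ` (F - {x})" using c(2) insert.hyps(2) by simp
      hence "inj_on (f(x:=c)) (insert x F)" using i1 inj_on_insert by blast
      moreover have "\<forall>v\<in>insert x F. (f(x:=c)) v \<in> L v" using f(2) c(1) insert.hyps(2) by simp
      ultimately show ?case by blast
    qed
  qed
  thus ?thesis using assms(1) by blast
qed

lemma choice_col:
  fixes L :: "'a \<Rightarrow> nat set"
  assumes G: "graph W F" and l: "\<forall>v\<in>W. finite (L v) \<and> choice_number W F \<le> card (L v)"
  shows "L_colorable W F L"
proof -
  let ?P = "\<lambda>k. \<forall>L :: 'a \<Rightarrow> nat set.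
        (\<forall>v\<in>W. finite (L v) \<and> k \<le> card (L v)) \<longrightarrow> L_colorable W F L"
  have fin: "finite W" using G by (simp add: graph_def)
  have "?P (card W)"
  proof (intro allI impI)
    fix L :: "'a \<Rightarrow> nat set" assume A: "\<forall>v\<in>W. finite (L v) \<and> card W \<le> card (L v)"
    obtain f where f: "inj_on f W" "\<forall>v\<in>W. f v \<in> L v" using inj_list_choice[OF fin A] by blast
    have "proper_coloring W F f" unfolding proper_coloring_def
    proof (intro ballI impI)
      fix u v assume uv: "u \<in> W" "v \<in> W" "F u v"
      hence "u \<noteq> v" using G unfolding graph_def by blast
      thus "f u \<noteq> f v" using inj_onD[OF f(1) _ uv(1) uv(2)] by blast
    qed
    thus "L_colorable W F L" using f unfolding L_colorable_def by blast
  qed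
  hence "?P (choice_number W F)" unfolding choice_number_def by (rule LeastI[of ?P])
  thus ?thesis using l by blast
qed

lemma chrom_le:
  assumes "proper_coloring V E f" "f ` V \<subseteq> {..<m}"
  shows "chromatic_number V E \<le> m"
  unfolding chromatic_number_def using assms by (intro Least_le) blast

lemma chrom_ex:
  assumes "proper_coloring V E (f::'a\<Rightarrow>nat)" "f ` V \<subseteq> {..<m}"
  shows "\<exists>g :: 'a \<Rightarrow> nat. proper_coloring V E g \<and> g ` V \<subseteq> {..<chromatic_number V E}"
proof -
  let ?Q = "\<lambda>k. \<exists>f :: 'a \<Rightarrow> nat. proper_coloring V E f \<and> f ` V \<subseteq> {..<k}"
  have "?Q m" using assms by blast
  hence "?Q (Least ?Q)" by (rule LeastI[of ?Q])
  thus ?thesis unfolding chromatic_number_def .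
qed


lemma part_col:
  assumes "complete_multipartite k V E" "S \<subseteq> V"
  shows "\<exists>f::'a\<Rightarrow>nat. proper_coloring S (induced_edges E S) f \<and> f ` S \<subseteq> {..<k}"
proof -
  obtain P where P0: "card P = k \<and> finite P \<and> {} \<notin> P \<and> \<Union>P = V \<and>
        (\<forall>X\<in>P. \<forall>Y\<in>P. X \<noteq> Y \<longrightarrow> X \<inter> Y = {}) \<and>
        (\<forall>u v. E u v \<longleftrightarrow> u \<in> V \<and> v \<in> V \<and> \<not> (\<exists>X\<in>P. u \<in> X \<and> v \<in> X))"
    using assms(1) unfolding complete_multipartite_def by (rule exE)
  have P: "card P = k" "finite P" "\<Union>P = V"
    "\<forall>u v. E u v \<longleftrightarrow> u \<in> V \<and> v \<in> V \<and> \<not> (\<exists>X\<in>P. u \<in> X \<and> v \<in> X)"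
    using P0 by simp_all
  obtain e where e: "bij_betw e P {0..<k}" using ex_bij_betw_finite_nat[OF P(2)] P(1) by blast
  define p where "p v = (SOME X. X \<in> P \<and> v \<in> X)" for v
  have sx: "p v \<in> P \<and> v \<in> p v" if "v \<in> V" for v
  proof -
    have "\<exists>X. X \<in> P \<and> v \<in> X" using that P(3) by blast
    thus ?thesis unfolding p_def by (rule someI_ex[of "\<lambda>X. X \<in> P \<and> v \<in> X"])
  qed
  define f where "f v = e (p v)" for v
  have "proper_coloring S (induced_edges E S) f"
    unfolding proper_coloring_def induced_edges_def
  proof (intro ballI impI)
    fix u v assume uv: "u \<in> S" "v \<in> S" "E u v \<and> u \<in> S \<and> v \<in> S"
    hence V: "u \<in> V" "v \<in> V" using assms(2) by auto
    have "E u v" using uv by simp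
    hence nx: "\<not> (\<exists>X\<in>P. u \<in> X \<and> v \<in> X)" using P(4) by simp
    show "f u \<noteq> f v"
    proof
      assume "f u = f v"
      hence "e (p u) = e (p v)" unfolding f_def .
      moreover have "inj_on e P" using e bij_betw_def by blast
      ultimately have "p u = p v" using sx[OF V(1)] sx[OF V(2)] inj_onD by metis
      thus False using nx sx[OF V(1)] sx[OF V(2)] by auto
    qed
  qed
  moreover have "f ` S \<subseteq> {..<k}"
  proof
    fix x assume "x \<in> f ` S"
    then obtain v where v: "v \<in> S" "x = e (p v)" unfolding f_def by blast
    have "p v \<in> P" using sx v(1) assms(2) by blast
    hence "e (p v) \<in> {0..<k}" using e bij_betwE by blast
    thus "x \<in> {..<k}" using v by simp
  qed
  ultimately show ?thesis by blast
qed


lemma core: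
  fixes k n :: nat and V :: "'a set" and E :: "'a \<Rightarrow> 'a \<Rightarrow> bool"
    and L :: "'a \<Rightarrow> 'c set" and A :: "'a set"
  assumes k1: "k \<ge> 1"
    and n_ge: "n \<ge> 2 * k + 2"
    and G: "graph V E"
    and Gkp: "complete_multipartite k V E"
    and nV: "card V = n"
    and lists: "\<forall>v\<in>V. finite (L v) \<and> of_int \<lceil>(real n + real k - 1) / 3\<rceil> \<le> int (card (L v))"
    and noLcol: "\<not> L_colorable V E L"
    and union_fin: "finite (\<Union>v\<in>V. L v)"
    and minimal: "\<forall>(W :: nat set) F. graph W F \<and> card W < n \<longrightarrow>
        int (choice_number W F) \<le> max (int (chromatic_number W F))
          \<lceil>(real (card W) + real (chromatic_number W F) - 1) / 3\<rceil>"
    and A_stable: "stable_set V E A"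
    and A_common: "(\<Inter>v\<in>A. L v) \<noteq> {}"
    and Ane: "A \<noteq> {}"
  shows "\<lceil>(real (card (V - A)) + real (chromatic_number (V - A) (induced_edges E (V - A))) - 1) / 3\<rceil>
         \<ge> \<lceil>(real n + real k - 1) / 3\<rceil>"
proof (rule ccontr)
  define T where "T = \<lceil>(real n + real k - 1) / 3\<rceil>"
  define W where "W = V - A"
  define \<chi> where "\<chi> = chromatic_number W (induced_edges E W)"
  assume "\<not> ?thesis"
  hence lt: "\<lceil>(real (card W) + real \<chi> - 1) / 3\<rceil> \<le> T - 1" unfolding T_def W_def \<chi>_def by linarith
  have finV: "finite V" using G by (simp add: graph_def)
  have AV: "A \<subseteq> V" using A_stable by (simp add: stable_set_def)
  have WV: "W \<subseteq> V" unfolding W_def by auto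
  have finW: "finite W" using finV WV finite_subset by blast
  obtain f0 :: "'a \<Rightarrow> nat" where f0p: "proper_coloring W (induced_edges E W) f0" "f0 ` W \<subseteq> {..<k}"
    using part_col[OF Gkp WV] by blast
  have chik: "\<chi> \<le> k" unfolding \<chi>_def by (rule chrom_le[OF f0p])
  obtain f1 :: "'a \<Rightarrow> nat" where f1: "proper_coloring W (induced_edges E W) f1" "f1 ` W \<subseteq> {..<\<chi>}"
    unfolding \<chi>_def using chrom_ex[OF f0p] by blast
  have "real k < (real n + real k - 1) / 3" using n_ge by simp
  also have "\<dots> \<le> real_of_int T" unfolding T_def by (rule le_of_int_ceiling)
  finally have kT: "int k \<le> T - 1" by linarith
  obtain c where c: "\<forall>v\<in>A. c \<in> L v" using A_common by blast
  obtain g :: "'a \<Rightarrow> nat" where g: "inj_on g W" using finite_imp_inj_to_nat_seg[OF finW] by blast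
  define gi where "gi = inv_into W g"
  have gig: "gi (g v) = v" if "v \<in> W" for v using g that unfolding gi_def by simp
  define CC where "CC = (\<Union>v\<in>V. L v)"
  obtain h :: "'c \<Rightarrow> nat" where h: "inj_on h CC" using finite_imp_inj_to_nat_seg union_fin unfolding CC_def by blast
  define hi where "hi = inv_into CC h"
  have hih: "hi (h y) = y" if "y \<in> CC" for y using h that unfolding hi_def by simp
  define W' where "W' = g ` W"
  define F' where "F' = (\<lambda>u v. u \<in> W' \<and> v \<in> W' \<and> E (gi u) (gi v))"
  have giW: "gi u \<in> W" if "u \<in> W'" for u using that gig unfolding W'_def by auto
  have GW': "graph W' F'" unfolding graph_def
  proof (rule conjI)
    show "finite W'" unfolding W'_def using finW by simp
  next
    show "\<forall>u v. F' u v \<longrightarrow> u \<in> W' \<and> v \<in> W' \<and> u \<noteq> v \<and> F' v u"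
    proof (intro allI impI)
    fix u v assume "F' u v"
    hence a: "u \<in> W'" "v \<in> W'" "E (gi u) (gi v)" unfolding F'_def by auto
    hence "gi u \<noteq> gi v" "E (gi v) (gi u)" using G unfolding graph_def by auto
    thus "u \<in> W' \<and> v \<in> W' \<and> u \<noteq> v \<and> F' v u" using a unfolding F'_def by auto
    qed
  qed
  have cW': "card W' = card W" unfolding W'_def using g card_image by blast
  have "W \<subset> V" unfolding W_def using AV Ane by blast
  hence "card W < card V" using finV psubset_card_mono by blast
  hence cn: "card W' < n" using cW' nV by simp
  have pr'1: "proper_coloring W' F' (f1 \<circ> gi)"
    using f1(1) giW unfolding proper_coloring_def F'_def induced_edges_def by auto
  have pr'2: "(f1 \<circ> gi) ` W' \<subseteq> {..<\<chi>}"
  proof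
    fix x assume "x \<in> (f1 \<circ> gi) ` W'"
    then obtain u where "u \<in> W'" "x = f1 (gi u)" by auto
    thus "x \<in> {..<\<chi>}" using f1(2) giW by blast
  qed
  note pr' = pr'1 pr'2
  have chi': "chromatic_number W' F' \<le> \<chi>" by (rule chrom_le[OF pr'])
  have "int (choice_number W' F') \<le> max (int (chromatic_number W' F'))
          \<lceil>(real (card W') + real (chromatic_number W' F') - 1) / 3\<rceil>"
    using minimal GW' cn by blast
  moreover have "\<lceil>(real (card W') + real (chromatic_number W' F') - 1) / 3\<rceil>
       \<le> \<lceil>(real (card W) + real \<chi> - 1) / 3\<rceil>"
    using chi' cW' by (intro ceiling_mono) (simp add: divide_right_mono)
  ultimately have chT: "int (choice_number W' F') \<le> T - 1" using chi' chik kT lt by linarith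
  define L' where "L' = (\<lambda>u. h ` (L (gi u) - {c}))"
  have "\<forall>u\<in>W'. finite (L' u) \<and> choice_number W' F' \<le> card (L' u)"
  proof
    fix u assume u: "u \<in> W'"
    hence gu: "gi u \<in> V" using giW WV by auto
    hence fl: "finite (L (gi u))" and cl: "T \<le> int (card (L (gi u)))" using lists T_def by auto
    have sub: "L (gi u) - {c} \<subseteq> CC" using gu unfolding CC_def by auto
    have "card (L' u) = card (L (gi u) - {c})" unfolding L'_def
      using inj_on_subset[OF h sub] card_image by blast
    moreover have "card (L (gi u)) \<le> card (L (gi u) - {c}) + 1"
    proof (cases "c \<in> L (gi u)")
      case True
      hence "card (L (gi u)) > 0" using fl card_gt_0_iff by blast
      thus ?thesis using True by (simp add: card_Diff_singleton_if)
    qed (simp add: card_Diff_singleton_if)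
    ultimately have "choice_number W' F' \<le> card (L' u)" using cl chT by linarith
    moreover have "finite (L' u)" using fl unfolding L'_def by simp
    ultimately show "finite (L' u) \<and> choice_number W' F' \<le> card (L' u)" by blast
  qed
  then obtain f' where f': "proper_coloring W' F' f'" "\<forall>u\<in>W'. f' u \<in> L' u"
    using choice_col[OF GW'] unfolding L_colorable_def by blast
  define f where "f v = (if v \<in> A then c else hi (f' (g v)))" for v
  have fy: "\<exists>y. y \<in> L v - {c} \<and> f' (g v) = h y \<and> y \<in> CC" if vW: "v \<in> W" for v
  proof -
    have gW: "g v \<in> W'" using vW unfolding W'_def by blast
    have "f' (g v) \<in> L' (g v)" using f'(2) gW by blast
    hence "f' (g v) \<in> h ` (L v - {c})" using gig[OF vW] by (simp add: L'_def)
    then obtain y where y: "y \<in> L v - {c}" "f' (g v) = h y" by blast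
    have "y \<in> CC" using y(1) vW WV unfolding CC_def by blast
    thus ?thesis using y by blast
  qed
  have fW: "f v \<in> L v - {c}" if vW: "v \<in> W" for v
  proof -
    obtain y where y: "y \<in> L v - {c}" "f' (g v) = h y" "y \<in> CC" using fy[OF vW] by blast
    have "v \<notin> A" using vW unfolding W_def by blast
    hence "f v = hi (h y)" using y(2) unfolding f_def by simp
    thus ?thesis using hih[OF y(3)] y(1) by simp
  qed
  have "L_colorable V E L" unfolding L_colorable_def
  proof (intro exI conjI)
    show "\<forall>v\<in>V. f v \<in> L v"
    proof
      fix v assume v: "v \<in> V"
      show "f v \<in> L v"
      proof (cases "v \<in> A")
        case True thus ?thesis using c unfolding f_def by simp
      next
        case False
        hence "v \<in> W" using v unfolding W_def by simp
        thus ?thesis using fW by blast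
      qed
    qed
    show "proper_coloring V E f" unfolding proper_coloring_def
    proof (intro ballI impI)
      fix u v assume uv: "u \<in> V" "v \<in> V" "E u v"
      show "f u \<noteq> f v"
      proof (cases "u \<in> A")
        case True
        hence "v \<notin> A" using A_stable uv unfolding stable_set_def by auto
        hence "v \<in> W" using uv unfolding W_def by auto
        hence "f v \<noteq> c" using fW by blast
        moreover have "f u = c" using True unfolding f_def by simp
        ultimately show ?thesis by simp
      next
        case uA: False
        show ?thesis
        proof (cases "v \<in> A")
          case True
          have "u \<in> W" using uA uv unfolding W_def by auto
          hence "f u \<noteq> c" using fW by blast
          moreover have "f v = c" using True unfolding f_def by simp
          ultimately show ?thesis by simp
        next
          case False
          hence W: "u \<in> W" "v \<in> W" using uA uv unfolding W_def by auto
          hence "F' (g u) (g v)" using uv gig unfolding F'_def W'_def by auto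
          hence ne: "f' (g u) \<noteq> f' (g v)" using f'(1) W unfolding proper_coloring_def W'_def by auto
          obtain yu where yu: "yu \<in> L u - {c}" "f' (g u) = h yu" "yu \<in> CC" using fy[OF W(1)] by blast
          obtain yv where yv: "yv \<in> L v - {c}" "f' (g v) = h yv" "yv \<in> CC" using fy[OF W(2)] by blast
          have "f u = yu" "f v = yv" using yu yv hih uA False unfolding f_def by auto
          thus ?thesis using ne yu(2) yv(2) by auto
        qed
      qed
    qed
  qed
  thus False using noLcol by blast
qed


theorem proposition10:
  fixes k n :: nat and V :: "'a set" and E :: "'a \<Rightarrow> 'a \<Rightarrow> bool"
    and L :: "'a \<Rightarrow> 'c set" and A :: "'a set"
  assumes k1: "k \<ge> 1"
    and n_ge: "n \<ge> 2 * k + 2"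
    and G: "graph V E"
    and Gkp: "complete_multipartite k V E"
    and nV: "card V = n"
    and lists: "\<forall>v\<in>V. finite (L v) \<and> of_int \<lceil>(real n + real k - 1) / 3\<rceil> \<le> int (card (L v))"
    and noLcol: "\<not> L_colorable V E L"
    and union_fin: "finite (\<Union>v\<in>V. L v)"
    and union_card: "card (\<Union>v\<in>V. L v) \<le> n - 1"
    and minimal: "\<forall>(W :: nat set) F. graph W F \<and> card W < n \<longrightarrow>
        int (choice_number W F) \<le> max (int (chromatic_number W F))
          \<lceil>(real (card W) + real (chromatic_number W F) - 1) / 3\<rceil>"
    and A_stable: "stable_set V E A"
    and A_common: "(\<Inter>v\<in>A. L v) \<noteq> {}"
  shows "\<lceil>(real (card (V - A)) + real (chromatic_number (V - A) (induced_edges E (V - A))) - 1) / 3\<rceil>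
         = \<lceil>(real n + real k - 1) / 3\<rceil>"
proof (rule antisym)
  have finV: "finite V" using G by (simp add: graph_def)
  have "card (V - A) \<le> n" using nV finV by (metis Diff_subset card_mono)
  moreover have "chromatic_number (V - A) (induced_edges E (V - A)) \<le> k"
    using part_col[OF Gkp, of "V - A"] chrom_le by blast
  ultimately show "\<lceil>(real (card (V - A)) + real (chromatic_number (V - A) (induced_edges E (V - A))) - 1) / 3\<rceil>
         \<le> \<lceil>(real n + real k - 1) / 3\<rceil>"
    by (intro ceiling_mono) (simp add: divide_right_mono)
next
  show "\<lceil>(real (card (V - A)) + real (chromatic_number (V - A) (induced_edges E (V - A))) - 1) / 3\<rceil>
         \<ge> \<lceil>(real n + real k - 1) / 3\<rceil>"
  proof (cases "A = {}")
    case False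
    show ?thesis by (rule core[OF assms(1-8) minimal A_stable A_common False])
  next
    case True
    have finV: "finite V" using G by (simp add: graph_def)
    have "V \<noteq> {}" using nV n_ge by auto
    then obtain v where v: "v \<in> V" by blast
    have st: "stable_set V E {v}" using v G unfolding stable_set_def graph_def by auto
    have "real k < (real n + real k - 1) / 3" using n_ge by simp
    also have "\<dots> \<le> real_of_int \<lceil>(real n + real k - 1) / 3\<rceil>" by (rule le_of_int_ceiling)
    finally have "1 \<le> card (L v)" using lists v k1 by fastforce
    hence "L v \<noteq> {}" by auto
    hence cm: "(\<Inter>x\<in>{v}. L x) \<noteq> {}" by simp
    note co = core[OF assms(1-8) minimal st cm]
    obtain f0 :: "'a \<Rightarrow> nat" where f0: "proper_coloring V (induced_edges E V) f0" "f0 ` V \<subseteq> {..<k}"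
      using part_col[OF Gkp, of V] by blast
    obtain f1 :: "'a \<Rightarrow> nat" where f1: "proper_coloring V (induced_edges E V) f1"
      "f1 ` V \<subseteq> {..<chromatic_number V (induced_edges E V)}"
      using chrom_ex[OF f0] by blast
    have "proper_coloring (V - {v}) (induced_edges E (V - {v})) f1"
      "f1 ` (V - {v}) \<subseteq> {..<chromatic_number V (induced_edges E V)}"
      using f1 unfolding proper_coloring_def induced_edges_def by auto
    hence c1: "chromatic_number (V - {v}) (induced_edges E (V - {v})) \<le> chromatic_number V (induced_edges E V)"
      by (rule chrom_le)
    have c2: "card (V - {v}) \<le> card V" using finV by (metis Diff_subset card_mono)
    have "\<lceil>(real (card (V - {v})) + real (chromatic_number (V - {v}) (induced_edges E (V - {v}))) - 1) / 3\<rceil>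
       \<le> \<lceil>(real (card V) + real (chromatic_number V (induced_edges E V)) - 1) / 3\<rceil>"
      using c1 c2 by (intro ceiling_mono) (simp add: divide_right_mono)
    thus ?thesis using co True by simp
  qed
qed

end
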